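(* Let $B$ be a finite block size, $c\ge1$ an integer, $\gamma\in(0,1]$, and $k,k'$ positive integers with $k+k'=B$ and $1\le k'\le\lfloor \gamma k/c\rfloor$. The burning second-price auction with parameters $(B,c,\gamma,k,k')$ satisfies UIC, MIC and $c$-SCP under $\gamma$-strict utility.
   Context: Setting (TFM). Users $i$ have true values $v_i\ge0$ and submit single bids $b_i\ge0$. A block holds at most $B$ transactions. A TFM has an inclusion rule (run by the miner, selecting at most $B$ bids), and confirmation, payment and miner-revenue rules (run by the blockchain on the included bids, possibly using trusted on-chain randomness revealed after inclusion); confirmed bids pay at most their bid, unconfirmed bids pay $0$, the miner receives at most the total payment and the rest is burnt. Burning second-price auction with parameters $(B,c,\gamma,k,k')$: Inclusion: include the $B$ highest bids (ties broken arbitrarily), denoted $b_1\ge\dots\ge b_B$; empty slots count as bids of $0$. Confirmation: using on-chain randomness choose a uniformly random subset $S\subseteq\{b_1,\dots,b_k\}$ of size exactly $\lfloor\gamma k/c\rfloor$; exactly the bids in $S$ are confirmed. Payment: each confirmed bid pays $b_{k+1}$. Miner revenue: $\gamma(b_{k+1}+\dots+b_{k+k'})$; remaining payment is burnt. Strategic players: a single user, the miner, or a coalition of the miner with some users. They may have their users bid untruthfully after seeing all other bids, inject fake bids (true value $0$), and, if the miner is involved, include any set of at most $B$ available bids instead of following the inclusion rule. $\gamma$-strict utility of a player: the miner's revenue (if the miner belongs to the player), plus $v-p$ for each confirmed transaction of the player with true value $v$ and payment $p$, minus $\gamma(b-v)$ for each unconfirmed transaction of the player whose bid $b$ exceeds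 its true value $v$; expected utilities are used. Under $\gamma$-strict utility: UIC — assuming the miner follows the mechanism, each user's expected utility is maximized by truthful bidding without fake bids, whatever the other bids; MIC — the miner's expected utility is maximized by following the inclusion rule without fake bids, whatever the bids; $c$-SCP — for every coalition of the miner with between $1$ and $c$ users, expected joint utility is maximized by truthful bidding and honest miner behavior, whatever the other bids. *)

theory Defs
  imports "HOL-Probability.Probability"
begin

text \<open>Bids are a list bs of reals; transactions are identified by their index into bs.
  A block is an ordered list of distinct indices (the included transactions, listed
  in non-increasing order of bid, ties broken arbitrarily). Slot j (0-based) holds
  bid b_(j+1); empty slots count as bids of 0.\<close>

definition valid_block :: "nat \<Rightarrow> real list \<Rightarrow> nat list \<Rightarrow> bool" where
  "valid_block B bs blk \<longleftrightarrow>
     distinct blk \<and> set blk \<subseteq> {..<length bs} \<and> length blk \<le> B \<and>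
     sorted_wrt (\<lambda>i j. bs ! j \<le> bs ! i) blk"

definition honest_block :: "nat \<Rightarrow> real list \<Rightarrow> nat list \<Rightarrow> bool" where
  "honest_block B bs blk \<longleftrightarrow>
     valid_block B bs blk \<and> length blk = min B (length bs) \<and>
     (\<forall>i\<in>set blk. \<forall>j<length bs. j \<notin> set blk \<longrightarrow> bs ! j \<le> bs ! i)"

definition slot :: "real list \<Rightarrow> nat list \<Rightarrow> nat \<Rightarrow> real" where
  "slot bs blk j = (if j < length blk then bs ! (blk ! j) else 0)"

definition n_conf :: "nat \<Rightarrow> real \<Rightarrow> nat \<Rightarrow> nat" where
  "n_conf c \<gamma> k = nat \<lfloor>\<gamma> * real k / real c\<rfloor>"

text \<open>On-chain randomness: a uniformly random set of exactly n_conf positions among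
  the top k positions 0..k-1.\<close>
definition conf_sets :: "nat \<Rightarrow> nat \<Rightarrow> nat set set" where
  "conf_sets k m = {S. S \<subseteq> {..<k} \<and> card S = m}"

definition confirmed :: "nat list \<Rightarrow> nat set \<Rightarrow> nat set" where
  "confirmed blk S = {blk ! j | j. j \<in> S \<and> j < length blk}"

text \<open>Price paid by every confirmed bid: b_(k+1) (slot k, 0-based).\<close>
definition price :: "nat \<Rightarrow> real list \<Rightarrow> nat list \<Rightarrow> real" where
  "price k bs blk = slot bs blk k"

definition miner_rev :: "real \<Rightarrow> nat \<Rightarrow> nat \<Rightarrow> real list \<Rightarrow> nat list \<Rightarrow> real" where
  "miner_rev \<gamma> k k' bs blk = \<gamma> * (\<Sum>j\<in>{k..<k+k'}. slot bs blk j)"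

definition strict_util ::
  "real \<Rightarrow> nat \<Rightarrow> nat \<Rightarrow> real list \<Rightarrow> nat list \<Rightarrow> nat set \<Rightarrow> nat set \<Rightarrow> (nat \<Rightarrow> real) \<Rightarrow> bool \<Rightarrow> real" where
  "strict_util \<gamma> k k' bs blk S P val minerIn =
     (if minerIn then miner_rev \<gamma> k k' bs blk else 0) +
     (\<Sum>i\<in>P. if i \<in> confirmed blk S then val i - price k bs blk
              else if bs ! i > val i then - \<gamma> * (bs ! i - val i) else 0)"

definition exp_util ::
  "nat \<Rightarrow> real \<Rightarrow> nat \<Rightarrow> nat \<Rightarrow> real list \<Rightarrow> nat list \<Rightarrow> nat set \<Rightarrow> (nat \<Rightarrow> real) \<Rightarrow> bool \<Rightarrow> real" where
  "exp_util c \<gamma> k k' bs blk P val minerIn =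
     measure_pmf.expectation (pmf_of_set (conf_sets k (n_conf c \<gamma> k)))
       (\<lambda>S. strict_util \<gamma> k k' bs blk S P val minerIn)"

definition nonneg :: "real list \<Rightarrow> bool" where
  "nonneg xs \<longleftrightarrow> (\<forall>x\<in>set xs. 0 \<le> x)"

text \<open>Coalition layout: bids are others @ own @ fakes. The coalition's real
  transactions have indices [length others ..< length others + length vs] with true
  values vs; fake bids (true value 0) follow.\<close>
definition coal_idx :: "real list \<Rightarrow> nat \<Rightarrow> nat set" where
  "coal_idx others n = {length others..<length others + n}"

definition fake_idx :: "real list \<Rightarrow> nat \<Rightarrow> real list \<Rightarrow> nat set" where
  "fake_idx others n fakes = {length others + n..<length others + n + length fakes}"

definition coal_val :: "real list \<Rightarrow> real list \<Rightarrow> nat \<Rightarrow> real" where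
  "coal_val others vs i =
     (if length others \<le> i \<and> i < length others + length vs then vs ! (i - length others) else 0)"

definition BSPA_UIC :: "nat \<Rightarrow> nat \<Rightarrow> real \<Rightarrow> nat \<Rightarrow> nat \<Rightarrow> bool" where
  "BSPA_UIC B c \<gamma> k k' \<longleftrightarrow>
     (\<forall>others v b fakes blk blk'.
        nonneg others \<longrightarrow> 0 \<le> v \<longrightarrow> 0 \<le> b \<longrightarrow> nonneg fakes \<longrightarrow>
        honest_block B (others @ [v]) blk \<longrightarrow>
        honest_block B (others @ [b] @ fakes) blk' \<longrightarrow>
        exp_util c \<gamma> k k' (others @ [b] @ fakes) blk'
            (coal_idx others 1 \<union> fake_idx others 1 fakes) (coal_val others [v]) False
          \<le> exp_util c \<gamma> k k' (others @ [v]) blk (coal_idx others 1) (coal_val others [v]) False)"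

definition BSPA_MIC :: "nat \<Rightarrow> nat \<Rightarrow> real \<Rightarrow> nat \<Rightarrow> nat \<Rightarrow> bool" where
  "BSPA_MIC B c \<gamma> k k' \<longleftrightarrow>
     (\<forall>bs fakes blk blk'.
        nonneg bs \<longrightarrow> nonneg fakes \<longrightarrow>
        honest_block B bs blk \<longrightarrow>
        valid_block B (bs @ fakes) blk' \<longrightarrow>
        exp_util c \<gamma> k k' (bs @ fakes) blk' (fake_idx bs 0 fakes) (\<lambda>_. 0) True
          \<le> exp_util c \<gamma> k k' bs blk {} (\<lambda>_. 0) True)"

definition BSPA_SCP :: "nat \<Rightarrow> nat \<Rightarrow> real \<Rightarrow> nat \<Rightarrow> nat \<Rightarrow> bool" where
  "BSPA_SCP B c \<gamma> k k' \<longleftrightarrow>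
     (\<forall>others vs ws fakes blk blk'.
        1 \<le> length vs \<longrightarrow> length vs \<le> c \<longrightarrow> length ws = length vs \<longrightarrow>
        nonneg others \<longrightarrow> nonneg vs \<longrightarrow> nonneg ws \<longrightarrow> nonneg fakes \<longrightarrow>
        honest_block B (others @ vs) blk \<longrightarrow>
        valid_block B (others @ ws @ fakes) blk' \<longrightarrow>
        exp_util c \<gamma> k k' (others @ ws @ fakes) blk'
            (coal_idx others (length vs) \<union> fake_idx others (length vs) fakes)
            (coal_val others vs) True
          \<le> exp_util c \<gamma> k k' (others @ vs) blk (coal_idx others (length vs))
            (coal_val others vs) True)"

end

theory Submission
  imports Defs
begin

lemma card_conf_all:
  "card (conf_sets k m) = k choose m"
  unfolding conf_sets_def using n_subsets[of "{..<k}" m] by simp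

lemma card_conf_with:
  assumes "j < k" "1 \<le> m"
  shows "card {S \<in> conf_sets k m. j \<in> S} = (k-1) choose (m-1)"
proof -
  have eq: "{S \<in> conf_sets k m. j \<in> S} = insert j ` {T. T \<subseteq> {..<k} - {j} \<and> card T = m - 1}"
  proof (rule set_eqI, rule iffI)
    fix S assume "S \<in> {S \<in> conf_sets k m. j \<in> S}"
    hence S: "S \<subseteq> {..<k}" "card S = m" "j \<in> S" by (auto simp: conf_sets_def)
    have fin: "finite S" using S(1) finite_subset by blast
    have "S = insert j (S - {j})" using S by auto
    moreover have "card (S - {j}) = m - 1" using S fin by simp
    ultimately show "S \<in> insert j ` {T. T \<subseteq> {..<k} - {j} \<and> card T = m - 1}"
      using S by blast
  next
    fix S assume "S \<in> insert j ` {T. T \<subseteq> {..<k} - {j} \<and> card T = m - 1}"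
    then obtain T where T: "T \<subseteq> {..<k} - {j}" "card T = m - 1" "S = insert j T" by blast
    have fin: "finite T" using T(1) finite_subset by blast
    have "card S = m" using T fin assms by (auto simp: card_insert_if)
    thus "S \<in> {S \<in> conf_sets k m. j \<in> S}" using T assms by (auto simp: conf_sets_def)
  qed
  have inj: "inj_on (insert j) {T. T \<subseteq> {..<k} - {j} \<and> card T = m - 1}"
    by (rule inj_onI) blast
  have "card {S \<in> conf_sets k m. j \<in> S} = card {T. T \<subseteq> {..<k} - {j} \<and> card T = m - 1}"
    using eq card_image[OF inj] by simp
  also have "\<dots> = card ({..<k} - {j}) choose (m - 1)" by (rule n_subsets) simp
  also have "card ({..<k} - {j}) = k - 1" using assms by simp
  finally show ?thesis .
qed

lemma conf_ratio:
  assumes "j < k" "1 \<le> m" "m \<le> k"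
  shows "real (card {S \<in> conf_sets k m. j \<in> S}) = real m / real k * real (card (conf_sets k m))"
proof -
  obtain k0 where k0: "k = Suc k0" using assms by (cases k) auto
  obtain m0 where m0: "m = Suc m0" using assms by (cases m) auto
  have "Suc m0 * (Suc k0 choose Suc m0) = Suc k0 * (k0 choose m0)"
    using binomial_absorption[of m0 "Suc k0"] by simp
  hence "real m * real (k choose m) = real k * real ((k-1) choose (m-1))"
    unfolding k0 m0 by (metis diff_Suc_1 of_nat_mult)
  thus ?thesis using card_conf_with[OF assms(1,2)] card_conf_all assms
    by (simp add: field_simps)
qed


lemma conf_sets_fin: "finite (conf_sets k m)"
  unfolding conf_sets_def by (rule finite_subset[of _ "Pow {..<k}"]) auto

lemma conf_sets_ne: "m \<le> k \<Longrightarrow> conf_sets k m \<noteq> {}"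
  using card_conf_all[of k m] by (metis card.empty zero_less_binomial_iff not_le less_numeral_extra(3))

lemma confirmed_iff:
  assumes "distinct blk" "j0 < length blk" "blk ! j0 = i"
  shows "i \<in> confirmed blk S \<longleftrightarrow> j0 \<in> S"
  using assms unfolding confirmed_def by (auto simp: nth_eq_iff_index_eq)

lemma not_confirmed:
  assumes "i \<notin> set (take k blk)" "S \<in> conf_sets k m"
  shows "i \<notin> confirmed blk S"
proof
  assume "i \<in> confirmed blk S"
  then obtain j where j: "j \<in> S" "j < length blk" "i = blk ! j" unfolding confirmed_def by auto
  have "j < k" using j(1) assms(2) unfolding conf_sets_def by auto
  hence "i \<in> set (take k blk)" using j by (auto simp: in_set_conv_nth)
  thus False using assms(1) by simp
qed

lemma sum_conf:
  assumes "distinct blk" "1 \<le> m" "m \<le> k"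
  shows "(\<Sum>S\<in>conf_sets k m. if i \<in> confirmed blk S then (a::real) else b)
     = real (card (conf_sets k m)) * (if i \<in> set (take k blk) then real m / real k * a + (1 - real m / real k) * b else b)"
proof (cases "i \<in> set (take k blk)")
  case True
  then obtain j0 where j0: "j0 < k" "j0 < length blk" "blk ! j0 = i"
    by (auto simp: in_set_conv_nth)
  let ?C = "conf_sets k m"
  have "(\<Sum>S\<in>?C. if i \<in> confirmed blk S then a else b) = (\<Sum>S\<in>?C. if j0 \<in> S then a else b)"
    using confirmed_iff[OF assms(1) j0(2,3)] by simp
  also have "\<dots> = (\<Sum>S\<in>?C \<inter> {S. j0 \<in> S}. a) + (\<Sum>S\<in>?C \<inter> - {S. j0 \<in> S}. b)"
    by (rule sum.If_cases) (rule conf_sets_fin)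
  also have "\<dots> = real (card {S\<in>?C. j0 \<in> S}) * a + real (card ?C - card {S\<in>?C. j0 \<in> S}) * b"
  proof -
    have "?C \<inter> - {S. j0 \<in> S} = ?C - {S\<in>?C. j0 \<in> S}" by auto
    hence "card (?C \<inter> - {S. j0 \<in> S}) = card ?C - card {S\<in>?C. j0 \<in> S}"
      using conf_sets_fin by (simp add: card_Diff_subset finite_subset)
    moreover have "?C \<inter> {S. j0 \<in> S} = {S\<in>?C. j0 \<in> S}" by auto
    ultimately show ?thesis by simp
  qed
  also have "\<dots> = real (card ?C) * (real m / real k * a + (1 - real m / real k) * b)"
  proof -
    have le: "card {S\<in>?C. j0 \<in> S} \<le> card ?C" using conf_sets_fin by (intro card_mono) auto
    show ?thesis using conf_ratio[OF j0(1) assms(2,3)] le by (simp add: of_nat_diff algebra_simps)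
  qed
  finally show ?thesis using True by simp
next
  case False
  thus ?thesis using not_confirmed[OF False] by simp
qed

lemma exp_util_eq:
  assumes "distinct blk" "finite P" "1 \<le> n_conf c \<gamma> k" "n_conf c \<gamma> k \<le> k"
  shows "exp_util c \<gamma> k k' bs blk P val mi =
    (if mi then miner_rev \<gamma> k k' bs blk else 0) +
    (\<Sum>i\<in>P. if i \<in> set (take k blk)
        then real (n_conf c \<gamma> k) / real k * (val i - price k bs blk)
             + (1 - real (n_conf c \<gamma> k) / real k) * (if bs!i > val i then - \<gamma> * (bs ! i - val i) else 0)
        else (if bs!i > val i then - \<gamma> * (bs ! i - val i) else 0))"
proof -
  let ?m = "n_conf c \<gamma> k"
  let ?C = "conf_sets k ?m"
  let ?R = "(if mi then miner_rev \<gamma> k k' bs blk else 0)"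
  let ?g = "\<lambda>i S. if i \<in> confirmed blk S then val i - price k bs blk
              else if bs ! i > val i then - \<gamma> * (bs ! i - val i) else 0"
  let ?h = "\<lambda>i. (if i \<in> set (take k blk)
        then real ?m / real k * (val i - price k bs blk)
             + (1 - real ?m / real k) * (if bs!i > val i then - \<gamma> * (bs ! i - val i) else 0)
        else (if bs!i > val i then - \<gamma> * (bs ! i - val i) else 0))"
  have cpos: "real (card ?C) > 0" using conf_sets_fin conf_sets_ne[OF assms(4)] card_gt_0_iff by auto
  have "exp_util c \<gamma> k k' bs blk P val mi = (\<Sum>S\<in>?C. strict_util \<gamma> k k' bs blk S P val mi) / card ?C"
    unfolding exp_util_def
    by (rule integral_pmf_of_set[OF conf_sets_ne[OF assms(4)] conf_sets_fin])
  also have "(\<Sum>S\<in>?C. strict_util \<gamma> k k' bs blk S P val mi) = (\<Sum>S\<in>?C. ?R + (\<Sum>i\<in>P. ?g i S))"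
    unfolding strict_util_def by simp
  also have "\<dots> = real (card ?C) * ?R + (\<Sum>i\<in>P. \<Sum>S\<in>?C. ?g i S)"
    by (simp add: sum.distrib sum.swap[of _ P])
  also have "(\<Sum>i\<in>P. \<Sum>S\<in>?C. ?g i S) = (\<Sum>i\<in>P. real (card ?C) *
      (if i \<in> set (take k blk)
        then real ?m / real k * (val i - price k bs blk)
             + (1 - real ?m / real k) * (if bs!i > val i then - \<gamma> * (bs ! i - val i) else 0)
        else (if bs!i > val i then - \<gamma> * (bs ! i - val i) else 0)))"
    by (rule sum.cong[OF refl], rule sum_conf[OF assms(1) assms(3,4)])
  also have "(\<Sum>i\<in>P. real (card ?C) * ?h i) = real (card ?C) * (\<Sum>i\<in>P. ?h i)"
    by (simp add: sum_distrib_left)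
  finally have "exp_util c \<gamma> k k' bs blk P val mi = real (card ?C) * (?R + (\<Sum>i\<in>P. ?h i)) / real (card ?C)"
    by (simp add: distrib_left)
  thus ?thesis using cpos by simp
qed


lemma prefix_sum:
  fixes h :: "nat \<Rightarrow> real"
  assumes mono: "\<And>i j. i \<le> j \<Longrightarrow> h j \<le> h i" and "finite J"
  shows "(\<Sum>j\<in>J. h j) \<le> (\<Sum>j<card J. h j)"
  using assms(2)
proof (induction "card J" arbitrary: J)
  case 0
  then show ?case by simp
next
  case (Suc n)
  hence ne: "J \<noteq> {}" by auto
  define M where "M = Max J"
  have MJ: "M \<in> J" using Max_in[OF Suc.prems ne] M_def by simp
  have cJ': "card (J - {M}) = n" using Suc.hyps(2) MJ Suc.prems by simp
  have IH: "(\<Sum>j\<in>J - {M}. h j) \<le> (\<Sum>j<n. h j)"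
    using Suc.hyps(1)[of "J - {M}"] cJ' Suc.prems by simp
  have "J \<subseteq> {..M}" using Max_ge[OF Suc.prems] M_def by auto
  hence "card J \<le> Suc M" using card_mono[of "{..M}" J] by simp
  hence "n \<le> M" using Suc.hyps(2) by simp
  hence hM: "h M \<le> h n" by (rule mono)
  have "(\<Sum>j\<in>J. h j) = h M + (\<Sum>j\<in>J - {M}. h j)"
    using Suc.prems MJ by (simp add: sum.remove)
  also have "\<dots> \<le> h n + (\<Sum>j<n. h j)" using IH hM by simp
  also have "\<dots> = (\<Sum>j<card J. h j)" using Suc.hyps(2)[symmetric] by simp
  finally show ?case .
qed

lemma sum_le_card_eq:
  fixes f g :: "'a \<Rightarrow> real"
  assumes "finite X" "finite Y" "card X = card Y" "\<And>x y. x \<in> X \<Longrightarrow> y \<in> Y \<Longrightarrow> f x \<le> g y"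
  shows "sum f X \<le> sum g Y"
proof -
  obtain h where h: "bij_betw h X Y" using finite_same_card_bij[OF assms(1-3)] by blast
  have "sum g Y = sum (g \<circ> h) X" using sum.reindex_bij_betw[OF h, of g] by simp
  moreover have "sum f X \<le> sum (g \<circ> h) X"
    using h assms(4) by (intro sum_mono) (auto simp: bij_betw_def)
  ultimately show ?thesis by simp
qed

lemma slot_nonneg:
  assumes "nonneg bs" "set blk \<subseteq> {..<length bs}"
  shows "0 \<le> slot bs blk j"
  using assms unfolding slot_def nonneg_def by (auto dest: nth_mem)

lemma slot_mono:
  assumes "valid_block B bs blk" "nonneg bs" "i \<le> j"
  shows "slot bs blk j \<le> slot bs blk i"
proof (cases "j < length blk")
  case True
  show ?thesis
  proof (cases "i = j")
    case False
    hence "i < j" using assms by simp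
    thus ?thesis using True assms(1) unfolding slot_def valid_block_def
      by (auto simp: sorted_wrt_iff_nth_less)
  qed simp
next
  case False
  thus ?thesis using slot_nonneg[OF assms(2), of blk i] assms(1)
    unfolding slot_def valid_block_def by auto
qed

lemma top_ge_price:
  assumes "valid_block B bs blk" "nonneg bs" "i \<in> set (take k blk)"
  shows "price k bs blk \<le> bs ! i"
proof -
  obtain j where j: "j < k" "j < length blk" "blk ! j = i" using assms(3) by (auto simp: in_set_conv_nth)
  have "slot bs blk k \<le> slot bs blk j" using slot_mono[OF assms(1,2)] j by simp
  thus ?thesis using j unfolding price_def slot_def by simp
qed

lemma low_le_price:
  assumes "valid_block B bs blk" "nonneg bs" "k \<le> j" "j < length blk"
  shows "bs ! (blk ! j) \<le> price k bs blk"
  using slot_mono[OF assms(1,2,3)] assms(4) unfolding price_def slot_def by simp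

lemma honest_set:
  assumes "honest_block B bs blk" "\<not> length blk = B"
  shows "set blk = {..<length bs}"
proof -
  have d: "distinct blk" "set blk \<subseteq> {..<length bs}" and l: "length blk = length bs"
    using assms unfolding honest_block_def valid_block_def by (auto simp: min_def split: if_splits)
  have "card (set blk) = card {..<length bs}" using distinct_card[OF d(1)] l by simp
  thus ?thesis using d(2) by (simp add: card_subset_eq)
qed

lemma honest_excl:
  assumes "honest_block B bs blk" "i < length bs" "i \<notin> set blk" "j < B"
  shows "length blk = B \<and> bs ! i \<le> slot bs blk j"
proof -
  have L: "length blk = B" using honest_set[OF assms(1)] assms(2,3) by auto
  hence "blk ! j \<in> set blk" using assms(4) by simp
  hence "bs ! i \<le> bs ! (blk ! j)" using assms(1-3) unfolding honest_block_def by blast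
  thus ?thesis using L assms(4) unfolding slot_def by simp
qed

definition ext :: "real list \<Rightarrow> nat \<Rightarrow> real" where
  "ext bs i = (if i < length bs then bs ! i else 0)"

lemma top_sum:
  fixes \<phi> :: "real \<Rightarrow> real"
  assumes H: "honest_block B bs blk" and nn: "nonneg bs" and mono: "mono \<phi>"
    and D: "finite D" "card D \<le> B"
  shows "(\<Sum>i\<in>D. \<phi> (ext bs i)) \<le> (\<Sum>j<card D. \<phi> (slot bs blk j))"
proof -
  have V: "valid_block B bs blk" using H unfolding honest_block_def by simp
  have dist: "distinct blk" and sub: "set blk \<subseteq> {..<length bs}" and lB: "length blk \<le> B"
    using V unfolding valid_block_def by auto
  define D1 where "D1 = D \<inter> set blk"
  define D2 where "D2 = D - set blk"
  define J1 where "J1 = {j. j < length blk \<and> blk ! j \<in> D}"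
  have bij: "bij_betw ((!) blk) J1 D1"
    unfolding bij_betw_def D1_def J1_def
  proof
    show "inj_on ((!) blk) {j. j < length blk \<and> blk ! j \<in> D}"
      using dist by (auto simp: inj_on_def nth_eq_iff_index_eq)
    show "(!) blk ` {j. j < length blk \<and> blk ! j \<in> D} = D \<inter> set blk"
      by (auto simp: in_set_conv_nth)
  qed
  have finJ1: "finite J1" unfolding J1_def by simp
  have cJ1: "card J1 = card D1" using bij_betw_same_card[OF bij] .
  have s1: "(\<Sum>i\<in>D1. \<phi> (ext bs i)) = (\<Sum>j\<in>J1. \<phi> (slot bs blk j))"
  proof -
    have "(\<Sum>i\<in>D1. \<phi> (ext bs i)) = (\<Sum>j\<in>J1. \<phi> (ext bs (blk ! j)))"
      using sum.reindex_bij_betw[OF bij, of "\<lambda>i. \<phi> (ext bs i)"] by simp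
    also have "\<dots> = (\<Sum>j\<in>J1. \<phi> (slot bs blk j))"
      using sub by (intro sum.cong) (auto simp: J1_def ext_def slot_def dest!: nth_mem)
    finally show ?thesis .
  qed
  have J1B: "J1 \<subseteq> {..<B}" using lB unfolding J1_def by auto
  have cD: "card D = card D1 + card D2"
    unfolding D1_def D2_def using D(1) by (metis Diff_Int2 Int_Diff_Un Int_Diff_disjoint card_Un_disjoint finite_Int finite_Diff inf.idem)
  have "card D2 \<le> card ({..<B} - J1)" using cD cJ1 D(2) J1B finJ1
    by (simp add: card_Diff_subset)
  then obtain J2 where J2: "J2 \<subseteq> {..<B} - J1" "card J2 = card D2" "finite J2"
    by (rule obtain_subset_with_card_n)
  have s2: "(\<Sum>i\<in>D2. \<phi> (ext bs i)) \<le> (\<Sum>j\<in>J2. \<phi> (slot bs blk j))"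
  proof (rule sum_le_card_eq)
    show "finite D2" using D(1) D2_def by simp
    show "finite J2" by fact
    show "card D2 = card J2" using J2 by simp
    fix i j assume i: "i \<in> D2" and j: "j \<in> J2"
    have jB: "j < B" using j J2 by auto
    have "ext bs i \<le> slot bs blk j"
    proof (cases "i < length bs")
      case True
      thus ?thesis using honest_excl[OF H True _ jB] i unfolding D2_def ext_def by auto
    next
      case False
      thus ?thesis using slot_nonneg[OF nn sub] unfolding ext_def by simp
    qed
    thus "\<phi> (ext bs i) \<le> \<phi> (slot bs blk j)" using mono by (simp add: monoD)
  qed
  have disj: "J1 \<inter> J2 = {}" using J2 by auto
  have "(\<Sum>i\<in>D. \<phi> (ext bs i)) = (\<Sum>i\<in>D1. \<phi> (ext bs i)) + (\<Sum>i\<in>D2. \<phi> (ext bs i))"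
    unfolding D1_def D2_def using D(1) by (metis Diff_Int2 Int_Diff_Un Int_Diff_disjoint finite_Diff finite_Int inf.idem sum.union_disjoint)
  also have "\<dots> \<le> (\<Sum>j\<in>J1. \<phi> (slot bs blk j)) + (\<Sum>j\<in>J2. \<phi> (slot bs blk j))"
    using s1 s2 by simp
  also have "\<dots> = (\<Sum>j\<in>J1 \<union> J2. \<phi> (slot bs blk j))"
    using disj finJ1 J2(3) by (simp add: sum.union_disjoint)
  also have "\<dots> \<le> (\<Sum>j<card (J1 \<union> J2). \<phi> (slot bs blk j))"
  proof (rule prefix_sum)
    fix i j :: nat assume "i \<le> j"
    thus "\<phi> (slot bs blk j) \<le> \<phi> (slot bs blk i)" using slot_mono[OF V nn] mono by (simp add: monoD)
  qed (use finJ1 J2 in simp)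
  also have "card (J1 \<union> J2) = card D" using disj finJ1 J2 cJ1 cD by (simp add: card_Un_disjoint)
  finally show ?thesis .
qed

lemma above_price_top:
  assumes H: "honest_block B bs blk" and nn: "nonneg bs" and kB: "k < B"
    and i: "i < length bs" "price k bs blk < bs ! i"
  shows "i \<in> set (take k blk)"
proof (cases "length blk \<le> k")
  case True
  hence "length blk \<noteq> B" using kB by simp
  hence "i \<in> set blk" using honest_set[OF H] i by auto
  thus ?thesis using True by simp
next
  case False
  have V: "valid_block B bs blk" using H unfolding honest_block_def by simp
  have "i \<in> set blk"
  proof (rule ccontr)
    assume "i \<notin> set blk"
    hence "bs ! i \<le> slot bs blk k" using honest_excl[OF H i(1) _ kB] by simp
    thus False using i(2) unfolding price_def by simp
  qed
  then obtain j where j: "j < length blk" "blk ! j = i" by (auto simp: in_set_conv_nth)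
  have "j < k"
  proof (rule ccontr)
    assume "\<not> j < k"
    hence "bs ! (blk ! j) \<le> price k bs blk" using low_le_price[OF V nn _ j(1)] by simp
    thus False using i(2) j by simp
  qed
  thus ?thesis using j by (auto simp: in_set_conv_nth)
qed


lemma honest_util:
  assumes H: "honest_block B bs blk" and nn: "nonneg bs" and kB: "k < B"
    and C: "C \<subseteq> {..<length bs}" "finite C" and vC: "\<And>i. i \<in> C \<Longrightarrow> val i = bs ! i"
    and m: "1 \<le> n_conf c \<gamma> k" "n_conf c \<gamma> k \<le> k"
  shows "exp_util c \<gamma> k k' bs blk C val mi = (if mi then miner_rev \<gamma> k k' bs blk else 0)
     + (\<Sum>i\<in>C. real (n_conf c \<gamma> k) / real k * max (bs ! i - price k bs blk) 0)"
proof -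
  have V: "valid_block B bs blk" using H unfolding honest_block_def by simp
  have dist: "distinct blk" using V unfolding valid_block_def by simp
  show ?thesis unfolding exp_util_eq[OF dist C(2) m]
  proof (intro arg_cong2[where f="(+)"] refl sum.cong)
    fix i assume i: "i \<in> C"
    have nopen: "\<not> bs ! i > val i" using vC[OF i] by simp
    show "(if i \<in> set (take k blk)
        then real (n_conf c \<gamma> k) / real k * (val i - price k bs blk)
             + (1 - real (n_conf c \<gamma> k) / real k) * (if bs!i > val i then - \<gamma> * (bs ! i - val i) else 0)
        else (if bs!i > val i then - \<gamma> * (bs ! i - val i) else 0))
       = real (n_conf c \<gamma> k) / real k * max (bs ! i - price k bs blk) 0"
    proof (cases "i \<in> set (take k blk)")
      case True
      hence "price k bs blk \<le> bs ! i" using top_ge_price[OF V nn] by simp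
      thus ?thesis using True nopen vC[OF i] by simp
    next
      case False
      hence "\<not> price k bs blk < bs ! i" using above_price_top[OF H nn kB] i C(1) by auto
      thus ?thesis using False nopen by simp
    qed
  qed
qed

lemma rev_eq:
  assumes "distinct blk"
  shows "miner_rev \<gamma> k k' bs blk = \<gamma> * (\<Sum>i\<in>(!) blk ` ({k..<k+k'} \<inter> {..<length blk}). bs ! i)"
proof -
  have "(\<Sum>j\<in>{k..<k+k'}. slot bs blk j) = (\<Sum>j\<in>{k..<k+k'}. if j \<in> {..<length blk} then bs ! (blk ! j) else 0)"
    unfolding slot_def by simp
  also have "\<dots> = (\<Sum>j\<in>{k..<k+k'} \<inter> {..<length blk}. bs ! (blk ! j))"
    by (simp add: sum.inter_restrict)
  also have "\<dots> = (\<Sum>i\<in>(!) blk ` ({k..<k+k'} \<inter> {..<length blk}). bs ! i)"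
    using assms by (subst sum.reindex) (auto simp: inj_on_def nth_eq_iff_index_eq)
  finally show ?thesis unfolding miner_rev_def by simp
qed


lemma pt_bound_top:
  fixes r \<gamma> v w p :: real
  assumes "0 < \<gamma>" "\<gamma> \<le> 1" "0 \<le> r" "r \<le> 1" "p \<le> w"
  shows "r * (v - p) + (1 - r) * (if w > v then - \<gamma> * (w - v) else 0)
     \<le> r * (if p \<le> v then v - p else 0) + \<gamma> * min v p - \<gamma> * p"
proof (cases "p \<le> v")
  case True
  have "(if w > v then - \<gamma> * (w - v) else 0) \<le> 0" using assms by auto
  hence "(1 - r) * (if w > v then - \<gamma> * (w - v) else 0) \<le> 0"
    using assms by (intro mult_nonneg_nonpos) auto
  moreover have "r * (if p \<le> v then v - p else 0) + \<gamma> * min v p - \<gamma> * p = r * (v - p)" using True by simp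
  ultimately show ?thesis by linarith
next
  case False
  hence wv: "w > v" using assms by simp
  have pen: "- \<gamma> * (w - v) \<le> - \<gamma> * (p - v)" using assms by simp
  have a: "(1 - r) * (- \<gamma> * (w - v)) \<le> (1 - r) * (- \<gamma> * (p - v))"
    using mult_left_mono[OF pen, of "1-r"] assms by simp
  have b: "0 \<le> r * (1 - \<gamma>) * (p - v)" using assms False by (intro mult_nonneg_nonneg) auto
  have eq: "r * (v - p) + (1 - r) * (- \<gamma> * (p - v)) = \<gamma> * (v - p) - r * (1 - \<gamma>) * (p - v)"
    by (simp add: algebra_simps)
  have lhs: "r*(v-p) + (1-r)*(if w>v then -\<gamma>*(w-v) else 0) = r*(v-p) + (1-r)*(-\<gamma>*(w-v))" using wv by simp
  have rhs: "r*(if p\<le>v then v-p else 0) + \<gamma>*min v p - \<gamma>*p = \<gamma>*(v-p)" using False by (simp add: algebra_simps)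
  show ?thesis using lhs rhs a b eq by linarith
qed

lemma dev_bound:
  fixes u :: "nat \<Rightarrow> real" and r \<gamma> :: real
  assumes V: "valid_block B bs blk" and nn: "nonneg bs" and P: "finite P"
    and uP: "\<And>i. i \<in> P \<Longrightarrow> val i = u i" and uO: "\<And>i. i \<in> set blk \<Longrightarrow> i \<notin> P \<Longrightarrow> bs ! i = u i"
    and g: "0 < \<gamma>" "\<gamma> \<le> 1" and r: "0 \<le> r" "r \<le> 1"
  shows "(\<Sum>i\<in>P. if i \<in> set (take k blk)
        then r * (val i - price k bs blk)
             + (1 - r) * (if bs!i > val i then - \<gamma> * (bs ! i - val i) else 0)
        else (if bs!i > val i then - \<gamma> * (bs ! i - val i) else 0)) + miner_rev \<gamma> k k' bs blk
     \<le> (\<Sum>i\<in>P \<inter> set (take k blk). r * (if price k bs blk \<le> u i then u i - price k bs blk else 0))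
        + \<gamma> * ((\<Sum>i\<in>set (take k blk) \<union> (!) blk ` ({k..<k+k'} \<inter> {..<length blk}). min (u i) (price k bs blk))
               - real (card (set (take k blk))) * price k bs blk)"
proof -
  define p where "p = price k bs blk"
  define Top where "Top = set (take k blk)"
  define R where "R = (!) blk ` ({k..<k+k'} \<inter> {..<length blk})"
  define pen where "pen i = (if bs!i > val i then - \<gamma> * (bs ! i - val i) else 0)" for i
  define tm where "tm i = (if i \<in> Top then r * (val i - p) + (1 - r) * pen i else pen i)" for i
  have dist: "distinct blk" using V unfolding valid_block_def by simp
  have finT: "finite Top" "finite R" unfolding Top_def R_def by auto
  have TR: "Top \<inter> R = {}"
  proof -
    { fix i assume "i \<in> Top" "i \<in> R"
      then obtain j j' where "j < k" "j < length blk" "blk ! j = i" "k \<le> j'" "j' < length blk" "blk ! j' = i"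
        unfolding Top_def R_def by (auto simp: in_set_conv_nth)
      hence False using dist by (metis nth_eq_iff_index_eq not_le) }
    thus ?thesis by blast
  qed
  have topge: "p \<le> bs ! i" if "i \<in> Top" for i using top_ge_price[OF V nn] that unfolding Top_def p_def by simp
  have Rle: "bs ! i \<le> p" if "i \<in> R" for i using low_le_price[OF V nn] that unfolding R_def p_def by auto
  have Tin: "i \<in> set blk" if "i \<in> Top" for i using that unfolding Top_def by (meson in_set_takeD)
  have Rin: "i \<in> set blk" if "i \<in> R" for i using that unfolding R_def by auto
  have penle: "pen i \<le> 0" for i unfolding pen_def using g by auto
  define U where "U = P \<union> Top \<union> R"
  have finU: "finite U" unfolding U_def using P finT by simp
  have UP: "U \<inter> P = P" and UR: "U \<inter> R = R" and UPT: "U \<inter> (P \<inter> Top) = P \<inter> Top"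
    and UTR: "U \<inter> (Top \<union> R) = Top \<union> R" and UT: "U \<inter> Top = Top" unfolding U_def by auto
  define Lf where "Lf i = (if i \<in> P then tm i else 0) + (if i \<in> R then \<gamma> * bs ! i else 0)" for i
  define Rf where "Rf i = (if i \<in> P \<inter> Top then r * (if p \<le> u i then u i - p else 0) else 0)
      + (if i \<in> Top \<union> R then \<gamma> * min (u i) p else 0) - (if i \<in> Top then \<gamma> * p else 0)" for i
  have pw: "Lf i \<le> Rf i" for i
  proof -
    consider (PT) "i \<in> P" "i \<in> Top" | (PR) "i \<in> P" "i \<in> R" | (PN) "i \<in> P" "i \<notin> Top" "i \<notin> R"
      | (OT) "i \<notin> P" "i \<in> Top" | (OR) "i \<notin> P" "i \<in> R" | (ON) "i \<notin> P" "i \<notin> Top" "i \<notin> R" by blast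
    thus ?thesis
    proof cases
      case PT
      hence "i \<notin> R" using TR by blast
      have vi: "val i = u i" using uP[OF PT(1)] .
      have "tm i \<le> r * (if p \<le> u i then u i - p else 0) + \<gamma> * min (u i) p - \<gamma> * p"
        using pt_bound_top[OF g r topge[OF PT(2)], of "u i"] PT unfolding tm_def pen_def vi by simp
      thus ?thesis using PT \<open>i \<notin> R\<close> unfolding Lf_def Rf_def by simp
    next
      case PR
      hence nT: "i \<notin> Top" using TR by blast
      have w: "bs ! i \<le> p" using Rle[OF PR(2)] .
      have "pen i + \<gamma> * bs ! i \<le> \<gamma> * min (u i) p"
      proof (cases "bs ! i > val i")
        case True thus ?thesis using w uP[OF PR(1)] g unfolding pen_def by (simp add: algebra_simps min_def)
      next
        case False thus ?thesis using w uP[OF PR(1)] g unfolding pen_def by (simp add: min_def)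
      qed
      thus ?thesis using PR nT unfolding Lf_def Rf_def tm_def by simp
    next
      case PN thus ?thesis using penle[of i] unfolding Lf_def Rf_def tm_def by simp
    next
      case OT
      hence "i \<notin> R" using TR by blast
      moreover have "p \<le> u i" using topge[OF OT(2)] uO[OF Tin[OF OT(2)] OT(1)] by simp
      ultimately show ?thesis using OT unfolding Lf_def Rf_def by (simp add: min_def)
    next
      case OR
      hence nT: "i \<notin> Top" using TR by blast
      have "u i \<le> p" using Rle[OF OR(2)] uO[OF Rin[OF OR(2)] OR(1)] by simp
      thus ?thesis using OR nT uO[OF Rin[OF OR(2)] OR(1)] unfolding Lf_def Rf_def by (simp add: min_def)
    next
      case ON thus ?thesis unfolding Lf_def Rf_def by simp
    qed
  qed
  have sL: "(\<Sum>i\<in>U. Lf i) = (\<Sum>i\<in>P. tm i) + \<gamma> * (\<Sum>i\<in>R. bs ! i)"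
  proof -
    have "(\<Sum>i\<in>U. Lf i) = (\<Sum>i\<in>U. if i \<in> P then tm i else 0) + (\<Sum>i\<in>U. if i \<in> R then \<gamma> * bs ! i else 0)"
      unfolding Lf_def by (simp add: sum.distrib)
    also have "\<dots> = (\<Sum>i\<in>U \<inter> P. tm i) + (\<Sum>i\<in>U \<inter> R. \<gamma> * bs ! i)"
      using finU by (simp add: sum.inter_restrict)
    finally show ?thesis using UP UR by (simp add: sum_distrib_left)
  qed
  have sR: "(\<Sum>i\<in>U. Rf i) = (\<Sum>i\<in>P \<inter> Top. r * (if p \<le> u i then u i - p else 0))
      + \<gamma> * ((\<Sum>i\<in>Top \<union> R. min (u i) p) - real (card Top) * p)"
  proof -
    have "(\<Sum>i\<in>U. Rf i) = (\<Sum>i\<in>U. if i \<in> P \<inter> Top then r * (if p \<le> u i then u i - p else 0) else 0)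
       + (\<Sum>i\<in>U. if i \<in> Top \<union> R then \<gamma> * min (u i) p else 0) - (\<Sum>i\<in>U. if i \<in> Top then \<gamma> * p else 0)"
      unfolding Rf_def by (simp add: sum.distrib sum_subtractf)
    also have "\<dots> = (\<Sum>i\<in>U \<inter> (P \<inter> Top). r * (if p \<le> u i then u i - p else 0))
       + (\<Sum>i\<in>U \<inter> (Top \<union> R). \<gamma> * min (u i) p) - (\<Sum>i\<in>U \<inter> Top. \<gamma> * p)"
      using finU by (simp only: sum.inter_restrict)
    finally show ?thesis using UPT UTR UT by (simp add: sum_distrib_left algebra_simps)
  qed
  have "(\<Sum>i\<in>P. tm i) + miner_rev \<gamma> k k' bs blk = (\<Sum>i\<in>U. Lf i)"
    using sL rev_eq[OF dist] unfolding R_def by simp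
  also have "\<dots> \<le> (\<Sum>i\<in>U. Rf i)" by (rule sum_mono) (rule pw)
  finally show ?thesis using sR unfolding tm_def pen_def Top_def R_def p_def by simp
qed


lemma ext_nonneg: "nonneg bs \<Longrightarrow> 0 \<le> ext bs i"
  unfolding ext_def nonneg_def by (auto dest: nth_mem)

lemma key_ineq:
  assumes H: "honest_block B hb hblk" and nnh: "nonneg hb"
    and V: "valid_block B bs blk" and nn: "nonneg bs" and kk: "k + k' = B"
  shows "(\<Sum>i\<in>set (take k blk) \<union> (!) blk ` ({k..<k+k'} \<inter> {..<length blk}). min (ext hb i) (price k bs blk))
    \<le> real (card (set (take k blk))) * price k bs blk + (\<Sum>j\<in>{k..<k+k'}. min (slot hb hblk j) (price k bs blk))"
proof -
  define p where "p = price k bs blk"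
  define Top where "Top = set (take k blk)"
  define R where "R = (!) blk ` ({k..<k+k'} \<inter> {..<length blk})"
  have sub: "set blk \<subseteq> {..<length bs}" and dist: "distinct blk" using V unfolding valid_block_def by auto
  have hsub: "set hblk \<subseteq> {..<length hb}" using H unfolding honest_block_def valid_block_def by auto
  have p0: "0 \<le> p" unfolding p_def price_def using slot_nonneg[OF nn sub] .
  have sl0: "0 \<le> min (slot hb hblk j) p" for j using slot_nonneg[OF nnh hsub] p0 by simp
  have RHS0: "0 \<le> real (card Top) * p + (\<Sum>j\<in>{k..<k+k'}. min (slot hb hblk j) p)"
    using p0 sl0 by (simp add: sum_nonneg)
  show ?thesis
  proof (cases "length blk \<le> k")
    case True
    hence "p = 0" unfolding p_def price_def slot_def by simp
    hence "(\<Sum>i\<in>Top \<union> R. min (ext hb i) p) = 0" using ext_nonneg[OF nnh] by simp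
    thus ?thesis using RHS0 unfolding Top_def R_def p_def by simp
  next
    case False
    have cT: "card Top = k" unfolding Top_def using False dist by (simp add: distinct_card)
    have cR: "card R \<le> k'" unfolding R_def
      by (rule order.trans[OF card_image_le]) (auto intro: order.trans[OF card_mono[of "{k..<k+k'}"]])
    have finTR: "finite (Top \<union> R)" unfolding Top_def R_def by simp
    have cTR: "card (Top \<union> R) \<le> k + k'" using card_Un_le[of Top R] cT cR by simp
    have mono: "mono (\<lambda>x::real. min x p)" by (auto simp: mono_def)
    have "(\<Sum>i\<in>Top \<union> R. min (ext hb i) p) \<le> (\<Sum>j<card (Top \<union> R). min (slot hb hblk j) p)"
      using top_sum[OF H nnh mono finTR] cTR kk by simp
    also have "\<dots> \<le> (\<Sum>j<k+k'. min (slot hb hblk j) p)"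
      using cTR sl0 by (intro sum_mono2) auto
    also have "\<dots> = (\<Sum>j<k. min (slot hb hblk j) p) + (\<Sum>j\<in>{k..<k+k'}. min (slot hb hblk j) p)"
      unfolding lessThan_atLeast0 by (rule sum.atLeastLessThan_concat[symmetric]) auto
    also have "(\<Sum>j<k. min (slot hb hblk j) p) \<le> real k * p"
      using sum_bounded_above[of "{..<k}" "\<lambda>j. min (slot hb hblk j) p" p] by simp
    finally show ?thesis using cT unfolding Top_def R_def p_def by simp
  qed
qed


lemma m_bound:
  assumes "1 \<le> c" "0 < \<gamma>" "\<gamma> \<le> 1"
  shows "real (n_conf c \<gamma> k) * real c \<le> \<gamma> * real k" "n_conf c \<gamma> k \<le> k"
proof -
  have x0: "0 \<le> \<gamma> * real k / real c" using assms by simp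
  have "real (n_conf c \<gamma> k) = of_int \<lfloor>\<gamma> * real k / real c\<rfloor>"
    unfolding n_conf_def using x0 by simp
  also have "\<dots> \<le> \<gamma> * real k / real c" by simp
  finally have a: "real (n_conf c \<gamma> k) \<le> \<gamma> * real k / real c" .
  thus "real (n_conf c \<gamma> k) * real c \<le> \<gamma> * real k" using assms by (simp add: field_simps)
  have "\<gamma> * real k / real c \<le> real k"
  proof -
    have "\<gamma> * real k \<le> real k" using assms by (simp add: mult_left_le_one_le)
    also have "\<dots> \<le> real k * real c" using assms mult_left_mono[of 1 "real c" "real k"] by simp
    finally show ?thesis using assms by (simp add: field_simps)
  qed
  thus "n_conf c \<gamma> k \<le> k" using a by linarith
qed

lemma nonneg_append: "nonneg (xs @ ys) \<longleftrightarrow> nonneg xs \<and> nonneg ys"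
  unfolding nonneg_def by auto

lemma scp_gen:
  assumes c1: "1 \<le> c" and g: "0 < \<gamma>" "\<gamma> \<le> 1" and k1: "1 \<le> k" and k'1: "1 \<le> k'"
    and kk: "k + k' = B" and km: "k' \<le> n_conf c \<gamma> k"
    and lvs: "length vs \<le> c" and lws: "length ws = length vs"
    and nn: "nonneg others" "nonneg vs" "nonneg ws" "nonneg fakes"
    and H: "honest_block B (others @ vs) blk"
    and V: "valid_block B (others @ ws @ fakes) blk'"
  shows "exp_util c \<gamma> k k' (others @ ws @ fakes) blk'
            (coal_idx others (length vs) \<union> fake_idx others (length vs) fakes)
            (coal_val others vs) True
          \<le> exp_util c \<gamma> k k' (others @ vs) blk (coal_idx others (length vs))
            (coal_val others vs) True"
proof -
  define m where "m = n_conf c \<gamma> k"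
  define r where "r = real m / real k"
  define hb where "hb = others @ vs"
  define bs where "bs = others @ ws @ fakes"
  define n where "n = length vs"
  define lo where "lo = length others"
  define C where "C = coal_idx others n"
  define F where "F = fake_idx others n fakes"
  define P where "P = C \<union> F"
  define val where "val = coal_val others vs"
  define u where "u = ext hb"
  define p where "p = price k hb blk"
  define p' where "p' = price k bs blk'"
  define Top where "Top = set (take k blk')"
  have m1: "1 \<le> m" using km k'1 unfolding m_def by simp
  have mk: "m \<le> k" and mc: "real m * real c \<le> \<gamma> * real k" using m_bound[OF c1 g] unfolding m_def by auto
  have r0: "0 \<le> r" and r1: "r \<le> 1" unfolding r_def using mk k1 by (auto simp: divide_le_eq_1)
  have rc: "r * real n \<le> \<gamma>"
  proof -
    have "r * real n \<le> r * real c" using r0 lvs unfolding n_def by (simp add: mult_left_mono)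
    also have "\<dots> = real m * real c / real k" unfolding r_def by simp
    also have "\<dots> \<le> \<gamma>" using mc k1 by (simp add: divide_le_eq)
    finally show ?thesis .
  qed
  have nnh: "nonneg hb" and nnb: "nonneg bs" using nn unfolding hb_def bs_def by (auto simp: nonneg_append)
  have kB: "k < B" using kk k'1 by simp
  have dist': "distinct blk'" using V unfolding valid_block_def by simp
  have sub': "set blk' \<subseteq> {..<length bs}" using V unfolding valid_block_def bs_def by simp
  have finP: "finite P" "finite C" "finite F" unfolding P_def C_def F_def coal_idx_def fake_idx_def by auto
  have CF: "C \<inter> F = {}" unfolding C_def F_def coal_idx_def fake_idx_def by auto
  have Csub: "C \<subseteq> {..<length hb}" unfolding C_def coal_idx_def hb_def n_def by auto
  have uC: "val i = hb ! i" "u i = hb ! i" if "i \<in> C" for i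
    using that unfolding val_def u_def C_def coal_idx_def coal_val_def hb_def n_def ext_def
    by (auto simp: nth_append)
  have uF: "val i = 0" "u i = 0" if "i \<in> F" for i
    using that unfolding val_def u_def F_def fake_idx_def coal_val_def hb_def n_def ext_def by auto
  have uP: "val i = u i" if "i \<in> P" for i using that uC uF unfolding P_def by auto
  have uO: "bs ! i = u i" if "i \<in> set blk'" "i \<notin> P" for i
  proof -
    have "i < length bs" using that sub' by auto
    hence "i < lo" using that(2) unfolding P_def C_def F_def coal_idx_def fake_idx_def bs_def lo_def n_def
      using lws by auto
    thus ?thesis unfolding u_def ext_def hb_def bs_def lo_def by (auto simp: nth_append)
  qed
  have p'0: "0 \<le> p'" unfolding p'_def price_def using slot_nonneg[OF nnb sub'] .
  have dev0: "exp_util c \<gamma> k k' bs blk' P val True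
     \<le> (\<Sum>i\<in>P \<inter> Top. r * (if p' \<le> u i then u i - p' else 0))
        + \<gamma> * ((\<Sum>i\<in>Top \<union> (!) blk' ` ({k..<k+k'} \<inter> {..<length blk'}). min (u i) p')
               - real (card Top) * p')"
    using exp_util_eq[OF dist' finP(1), of c \<gamma> k k' bs val True] m1 mk
      dev_bound[OF V[folded bs_def] nnb finP(1) uP uO g r0 r1, of k k']
    unfolding m_def r_def p'_def Top_def by (simp add: add.commute)
  have ki: "(\<Sum>i\<in>Top \<union> (!) blk' ` ({k..<k+k'} \<inter> {..<length blk'}). min (u i) p')
     \<le> real (card Top) * p' + (\<Sum>j\<in>{k..<k+k'}. min (slot hb blk j) p')"
    using key_ineq[OF H[folded hb_def] nnh V[folded bs_def] nnb kk] unfolding u_def p'_def Top_def .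
  define f where "f i = r * (if p' \<le> u i then u i - p' else 0)" for i
  have f0: "0 \<le> f i" for i unfolding f_def using r0 by auto
  have fF: "f i \<le> 0" if "i \<in> F" for i unfolding f_def using uF[OF that] p'0 by auto
  have sP: "(\<Sum>i\<in>P \<inter> Top. f i) \<le> (\<Sum>i\<in>C. f i)"
  proof -
    have "(\<Sum>i\<in>P \<inter> Top. f i) = (\<Sum>i\<in>C \<inter> Top. f i) + (\<Sum>i\<in>F \<inter> Top. f i)"
      unfolding P_def Int_Un_distrib2 using finP CF by (intro sum.union_disjoint) auto
    also have "(\<Sum>i\<in>F \<inter> Top. f i) \<le> 0" using fF by (intro sum_nonpos) auto
    also have "(\<Sum>i\<in>C \<inter> Top. f i) \<le> (\<Sum>i\<in>C. f i)" using finP f0 by (intro sum_mono2) auto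
    finally show ?thesis by simp
  qed
  have sC: "(\<Sum>i\<in>C. f i) \<le> (\<Sum>i\<in>C. r * max (hb ! i - p) 0) + \<gamma> * max (p - p') 0"
  proof -
    have "(\<Sum>i\<in>C. f i) \<le> (\<Sum>i\<in>C. r * max (hb ! i - p) 0 + r * max (p - p') 0)"
    proof (rule sum_mono)
      fix i assume i: "i \<in> C"
      have "(if p' \<le> u i then u i - p' else 0) \<le> max (hb ! i - p) 0 + max (p - p') 0"
        using uC(2)[OF i] by auto
      thus "f i \<le> r * max (hb ! i - p) 0 + r * max (p - p') 0"
        unfolding f_def using r0 by (simp add: mult_left_mono flip: distrib_left)
    qed
    also have "\<dots> = (\<Sum>i\<in>C. r * max (hb ! i - p) 0) + real (card C) * (r * max (p - p') 0)"
      by (simp add: sum.distrib)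
    also have "real (card C) * (r * max (p - p') 0) \<le> \<gamma> * max (p - p') 0"
    proof -
      have "card C = n" unfolding C_def coal_idx_def by simp
      hence "real (card C) * (r * max (p - p') 0) = (r * real n) * max (p - p') 0" by simp
      also have "\<dots> \<le> \<gamma> * max (p - p') 0" using rc by (intro mult_right_mono) auto
      finally show ?thesis .
    qed
    finally show ?thesis by simp
  qed
  have sS: "(\<Sum>j\<in>{k..<k+k'}. min (slot hb blk j) p') + max (p - p') 0 \<le> (\<Sum>j\<in>{k..<k+k'}. slot hb blk j)"
  proof -
    have "(\<Sum>j\<in>{k..<k+k'}. min (slot hb blk j) p') = min (slot hb blk k) p' + (\<Sum>j\<in>{Suc k..<k+k'}. min (slot hb blk j) p')"
      using k'1 by (subst sum.atLeast_Suc_lessThan) auto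
    moreover have "(\<Sum>j\<in>{k..<k+k'}. slot hb blk j) = slot hb blk k + (\<Sum>j\<in>{Suc k..<k+k'}. slot hb blk j)"
      using k'1 by (subst sum.atLeast_Suc_lessThan) auto
    moreover have "(\<Sum>j\<in>{Suc k..<k+k'}. min (slot hb blk j) p') \<le> (\<Sum>j\<in>{Suc k..<k+k'}. slot hb blk j)"
      by (intro sum_mono) simp
    moreover have "min (slot hb blk k) p' + max (p - p') 0 = slot hb blk k" unfolding p_def price_def by auto
    ultimately show ?thesis by linarith
  qed
  have hon: "exp_util c \<gamma> k k' hb blk C val True
      = \<gamma> * (\<Sum>j\<in>{k..<k+k'}. slot hb blk j) + (\<Sum>i\<in>C. r * max (hb ! i - p) 0)"
    using honest_util[OF H[folded hb_def] nnh kB Csub finP(2) uC(1), of c \<gamma> k' True] m1 mk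
    unfolding m_def r_def p_def miner_rev_def by simp
  have "exp_util c \<gamma> k k' bs blk' P val True
     \<le> (\<Sum>i\<in>C. f i) + \<gamma> * (\<Sum>j\<in>{k..<k+k'}. min (slot hb blk j) p')"
    using dev0 sP ki g unfolding f_def
    by (smt (verit, ccfv_SIG) mult_left_mono)
  also have "\<dots> \<le> exp_util c \<gamma> k k' hb blk C val True"
  proof -
    have "\<gamma> * ((\<Sum>j\<in>{k..<k+k'}. min (slot hb blk j) p') + max (p - p') 0) \<le> \<gamma> * (\<Sum>j\<in>{k..<k+k'}. slot hb blk j)"
      using sS g by (intro mult_left_mono) auto
    thus ?thesis unfolding hon using sC by (simp add: distrib_left)
  qed
  finally show ?thesis unfolding bs_def hb_def P_def C_def F_def val_def n_def .
qed


lemma uic_price: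
  assumes H: "honest_block B (others @ [v]) blk" and H': "honest_block B (others @ [b] @ fakes) blk'"
    and nn: "nonneg others" "0 \<le> v" "0 \<le> b" "nonneg fakes" and kB: "k < B"
    and top: "length others \<in> set (take k blk')"
  shows "price k (others @ [v]) blk \<le> price k (others @ [b] @ fakes) blk'"
proof (rule ccontr)
  define hb where "hb = others @ [v]"
  define bs where "bs = others @ [b] @ fakes"
  define lo where "lo = length others"
  assume "\<not> ?thesis"
  hence lt: "price k bs blk' < price k hb blk" unfolding hb_def bs_def by simp
  have nnh: "nonneg hb" and nnb: "nonneg bs" using nn unfolding hb_def bs_def nonneg_def by auto
  have V: "valid_block B hb blk" using H unfolding honest_block_def hb_def by simp
  have V': "valid_block B bs blk'" using H' unfolding honest_block_def bs_def by simp
  have dist: "distinct blk" and sub: "set blk \<subseteq> {..<length hb}" using V unfolding valid_block_def by auto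
  have dist': "distinct blk'" using V' unfolding valid_block_def by auto
  have long: "k < length blk"
  proof (rule ccontr)
    assume "\<not> k < length blk"
    hence "price k hb blk = 0" unfolding price_def slot_def by simp
    moreover have "0 \<le> price k bs blk'" unfolding price_def
      using slot_nonneg[OF nnb] V' unfolding valid_block_def by simp
    ultimately show False using lt by simp
  qed
  define X where "X = set (take (Suc k) blk) - {lo}"
  have cX: "k \<le> card X"
  proof -
    have "card (set (take (Suc k) blk)) = Suc k" using long dist by (simp add: distinct_card)
    thus ?thesis unfolding X_def by (simp add: card_Diff_singleton_if)
  qed
  have XT: "X \<subseteq> set (take k blk')"
  proof
    fix i assume i: "i \<in> X"
    then obtain j where j: "j < Suc k" "j < length blk" "blk ! j = i" "i \<noteq> lo"
      unfolding X_def by (auto simp: in_set_conv_nth)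
    have "i < length hb" using sub j nth_mem by blast
    hence ilo: "i < lo" using j(4) unfolding hb_def lo_def by simp
    have "slot hb blk k \<le> slot hb blk j" using slot_mono[OF V nnh] j by simp
    hence "price k hb blk \<le> hb ! i" using j unfolding price_def slot_def by simp
    moreover have "hb ! i = bs ! i" using ilo unfolding hb_def bs_def lo_def by (simp add: nth_append)
    ultimately have "price k bs blk' < bs ! i" using lt by simp
    moreover have "i < length bs" using ilo unfolding bs_def lo_def by simp
    ultimately show "i \<in> set (take k blk')" using above_price_top[OF H'[folded bs_def] nnb kB] by simp
  qed
  have "insert lo X \<subseteq> set (take k blk')" using XT top unfolding lo_def by simp
  hence "card (insert lo X) \<le> card (set (take k blk'))" by (intro card_mono) auto
  also have "\<dots> \<le> k" using card_length[of "take k blk'"] by simp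
  finally have "card (insert lo X) \<le> k" .
  moreover have "lo \<notin> X" "finite X" unfolding X_def by auto
  ultimately show False using cX by simp
qed


lemma uic_gen:
  assumes c1: "1 \<le> c" and g: "0 < \<gamma>" "\<gamma> \<le> 1" and k1: "1 \<le> k" and k'1: "1 \<le> k'"
    and kk: "k + k' = B" and km: "k' \<le> n_conf c \<gamma> k"
    and nn: "nonneg others" "0 \<le> v" "0 \<le> b" "nonneg fakes"
    and H: "honest_block B (others @ [v]) blk" and H': "honest_block B (others @ [b] @ fakes) blk'"
  shows "exp_util c \<gamma> k k' (others @ [b] @ fakes) blk'
            (coal_idx others 1 \<union> fake_idx others 1 fakes) (coal_val others [v]) False
          \<le> exp_util c \<gamma> k k' (others @ [v]) blk (coal_idx others 1) (coal_val others [v]) False"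
proof -
  define m where "m = n_conf c \<gamma> k"
  define r where "r = real m / real k"
  define hb where "hb = others @ [v]"
  define bs where "bs = others @ [b] @ fakes"
  define lo where "lo = length others"
  define C where "C = coal_idx others 1"
  define F where "F = fake_idx others 1 fakes"
  define P where "P = C \<union> F"
  define val where "val = coal_val others [v]"
  define p where "p = price k hb blk"
  define p' where "p' = price k bs blk'"
  define Top where "Top = set (take k blk')"
  have m1: "1 \<le> m" using km k'1 unfolding m_def by simp
  have mk: "m \<le> k" using m_bound[OF c1 g] unfolding m_def by auto
  have r0: "0 \<le> r" and r1: "r \<le> 1" unfolding r_def using mk k1 by (auto simp: divide_le_eq_1)
  have nnh: "nonneg hb" and nnb: "nonneg bs" using nn unfolding hb_def bs_def nonneg_def by auto
  have kB: "k < B" using kk k'1 by simp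
  have V': "valid_block B bs blk'" using H' unfolding honest_block_def bs_def by simp
  have dist': "distinct blk'" and sub': "set blk' \<subseteq> {..<length bs}" using V' unfolding valid_block_def by auto
  have finP: "finite P" "finite C" unfolding P_def C_def F_def coal_idx_def fake_idx_def by auto
  have Ceq: "C = {lo}" unfolding C_def coal_idx_def lo_def by auto
  have loP: "lo \<in> P" unfolding P_def Ceq by simp
  have Csub: "C \<subseteq> {..<length hb}" unfolding Ceq hb_def lo_def by auto
  have vC: "val i = hb ! i" if "i \<in> C" for i using that unfolding Ceq val_def coal_val_def hb_def lo_def by simp
  have vlo: "val lo = v" unfolding val_def coal_val_def lo_def by simp
  have hlo: "hb ! lo = v" unfolding hb_def lo_def by simp
  have vF: "val i = 0" if "i \<in> F" for i using that unfolding val_def F_def fake_idx_def coal_val_def by auto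
  have p'0: "0 \<le> p'" unfolding p'_def price_def using slot_nonneg[OF nnb sub'] .
  have hon: "exp_util c \<gamma> k k' hb blk C val False = r * max (v - p) 0"
    using honest_util[OF H[folded hb_def] nnh kB Csub finP(2) vC, of c \<gamma> k' False] m1 mk
    unfolding m_def r_def p_def Ceq by (simp add: hlo)
  define pen where "pen i = (if bs!i > val i then - \<gamma> * (bs ! i - val i) else 0)" for i
  have penle: "pen i \<le> 0" for i unfolding pen_def using g by auto
  define tm where "tm i = (if i \<in> Top then r * (val i - p') + (1 - r) * pen i else pen i)" for i
  have dev: "exp_util c \<gamma> k k' bs blk' P val False = (\<Sum>i\<in>P. tm i)"
    using exp_util_eq[OF dist' finP(1), of c \<gamma> k k' bs val False] m1 mk
    unfolding m_def r_def tm_def pen_def Top_def p'_def by simp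
  define gg where "gg i = (if i = lo then (if lo \<in> Top then r * (v - p') else 0) else 0)" for i
  have pw: "tm i \<le> gg i" if "i \<in> P" for i
  proof -
    have a: "(1 - r) * pen i \<le> 0" using r1 penle[of i] by (intro mult_nonneg_nonpos) auto
    show ?thesis
    proof (cases "i = lo")
      case True
      thus ?thesis using a penle[of i] vlo unfolding tm_def gg_def by auto
    next
      case False
      hence "i \<in> F" using that unfolding P_def Ceq by simp
      hence "val i = 0" by (rule vF)
      moreover have "r * (0 - p') \<le> 0" using r0 p'0 by (simp add: mult_nonneg_nonneg)
      ultimately show ?thesis using a penle[of i] False unfolding tm_def gg_def by auto
    qed
  qed
  have "(\<Sum>i\<in>P. tm i) \<le> (\<Sum>i\<in>P. gg i)" using pw by (rule sum_mono)
  also have "\<dots> = (if lo \<in> Top then r * (v - p') else 0)"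
    unfolding gg_def using finP(1) loP by simp
  also have "\<dots> \<le> r * max (v - p) 0"
  proof (cases "lo \<in> Top")
    case True
    have "p \<le> p'" using uic_price[OF H H' nn kB] True unfolding p_def p'_def hb_def bs_def Top_def lo_def by simp
    hence "v - p' \<le> max (v - p) 0" by simp
    thus ?thesis using True r0 by (simp add: mult_left_mono)
  next
    case False thus ?thesis using r0 by simp
  qed
  finally show ?thesis using dev hon unfolding bs_def hb_def P_def C_def F_def val_def by simp
qed

theorem mainTheorem3:
  fixes B c k k' :: nat and \<gamma> :: real
  assumes "1 \<le> c"
    and "0 < \<gamma>" and "\<gamma> \<le> 1"
    and "1 \<le> k" and "1 \<le> k'" and "k + k' = B"
    and "k' \<le> n_conf c \<gamma> k"
  shows "BSPA_UIC B c \<gamma> k k' \<and> BSPA_MIC B c \<gamma> k k' \<and> BSPA_SCP B c \<gamma> k k'"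
proof (intro conjI)
  show "BSPA_UIC B c \<gamma> k k'" unfolding BSPA_UIC_def
    using uic_gen[OF assms] by blast
  show "BSPA_SCP B c \<gamma> k k'" unfolding BSPA_SCP_def
    using scp_gen[OF assms] by blast
  show "BSPA_MIC B c \<gamma> k k'" unfolding BSPA_MIC_def
  proof (intro allI impI)
    fix bs fakes blk blk'
    assume a: "nonneg bs" "nonneg fakes" "honest_block B bs blk" "valid_block B (bs @ fakes) blk'"
    have cv: "coal_val bs [] = (\<lambda>_. 0)" unfolding coal_val_def by auto
    have "nonneg []" unfolding nonneg_def by simp
    from scp_gen[OF assms, of "[]" "[]" bs fakes blk blk'] a this
    show "exp_util c \<gamma> k k' (bs @ fakes) blk' (fake_idx bs 0 fakes) (\<lambda>_. 0) True
        \<le> exp_util c \<gamma> k k' bs blk {} (\<lambda>_. 0) True"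
      by (simp add: cv coal_idx_def)
  qed
qed

end
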